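(* Let $q\ge 2$ and $n\ge 2$ be integers, with $n\ge 3$ if $q=2$. Then $\chi(H_q(n,2))=q^{n-1}$, and every proper $q^{n-1}$-coloring of $H_q(n,2)$ is even.
   Context: $\mathbb{Z}_q=\mathbb{Z}/q\mathbb{Z}$; for $x,y\in\mathbb{Z}_q^n$, $\mathrm{d}(x,y)=|\{i: x_i\neq y_i\}|$ is the Hamming distance. $H_q(n,d)$ is the simple undirected graph with vertex set $\mathbb{Z}_q^n$ in which $x,y$ are adjacent iff $\mathrm{d}(x,y)\ge d$. $\chi$ denotes the chromatic number. A coloring is called even if all its color classes have the same cardinality. *)

theory Defs
  imports Main
begin

text \<open>Vertex set of H_q(n,d): words of length n over Z_q = {0..<q}, represented as
  functions nat => nat which vanish outside {0..<n} (extensional representation).\<close>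
definition words :: "nat \<Rightarrow> nat \<Rightarrow> (nat \<Rightarrow> nat) set" where
  "words q n = {x. (\<forall>i<n. x i < q) \<and> (\<forall>i\<ge>n. x i = 0)}"

definition hdist :: "nat \<Rightarrow> (nat \<Rightarrow> nat) \<Rightarrow> (nat \<Rightarrow> nat) \<Rightarrow> nat" where
  "hdist n x y = card {i. i < n \<and> x i \<noteq> y i}"

definition H_adj :: "nat \<Rightarrow> nat \<Rightarrow> nat \<Rightarrow> (nat \<Rightarrow> nat) \<Rightarrow> (nat \<Rightarrow> nat) \<Rightarrow> bool" where
  "H_adj q n d x y \<longleftrightarrow> x \<in> words q n \<and> y \<in> words q n \<and> hdist n x y \<ge> d"

text \<open>A proper k-coloring of H_q(n,d): colors in {0..<k}, adjacent vertices get distinct colors.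
  (The graph is simple, so loops x = x are not edges; for d >= 1 hdist n x x = 0 < d anyway.)\<close>
definition proper_coloring :: "nat \<Rightarrow> nat \<Rightarrow> nat \<Rightarrow> nat \<Rightarrow> ((nat \<Rightarrow> nat) \<Rightarrow> nat) \<Rightarrow> bool" where
  "proper_coloring q n d k c \<longleftrightarrow>
     (\<forall>x\<in>words q n. c x < k) \<and>
     (\<forall>x y. x \<noteq> y \<and> H_adj q n d x y \<longrightarrow> c x \<noteq> c y)"

definition chromatic_number :: "nat \<Rightarrow> nat \<Rightarrow> nat \<Rightarrow> nat" where
  "chromatic_number q n d = (LEAST k. \<exists>c. proper_coloring q n d k c)"

definition even_coloring :: "nat \<Rightarrow> nat \<Rightarrow> nat \<Rightarrow> ((nat \<Rightarrow> nat) \<Rightarrow> nat) \<Rightarrow> bool" where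
  "even_coloring q n k c \<longleftrightarrow>
     (\<forall>j<k. \<forall>j'<k. card {x\<in>words q n. c x = j} = card {x\<in>words q n. c x = j'})"

end

theory Submission
  imports Defs "HOL-Library.FuncSet"
begin

lemma hd2:
  assumes "i<n" "j<n" "i\<noteq>j" "x i \<noteq> y i" "x j \<noteq> y j"
  shows "hdist n x y \<ge> 2"
proof -
  have "{i,j} \<subseteq> {i. i < n \<and> x i \<noteq> y i}" using assms by auto
  moreover have "finite {i. i < n \<and> x i \<noteq> y i}" by auto
  ultimately have "card {i,j} \<le> hdist n x y" unfolding hdist_def by (rule card_mono[rotated])
  thus ?thesis using assms(3) by simp
qed

lemma card_words: "card (words q n) = q ^ n"
proof -
  have "bij_betw (\<lambda>x. restrict x {..<n}) (words q n) (PiE {..<n} (\<lambda>_. {..<q}))"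
  proof (rule bij_betwI[where g="\<lambda>f i. if i < n then f i else 0"])
    show "(\<lambda>x. restrict x {..<n}) \<in> words q n \<rightarrow> PiE {..<n} (\<lambda>_. {..<q})"
      by (auto simp: words_def)
    show "(\<lambda>f i. if i < n then f i else 0) \<in> PiE {..<n} (\<lambda>_. {..<q}) \<rightarrow> words q n"
      by (auto simp: words_def PiE_def Pi_def)
    show "\<And>x. x \<in> words q n \<Longrightarrow> (\<lambda>i. if i < n then restrict x {..<n} i else 0) = x"
      by (auto simp: words_def)
    show "\<And>y. y \<in> PiE {..<n} (\<lambda>_. {..<q}) \<Longrightarrow> restrict (\<lambda>i. if i < n then y i else 0) {..<n} = y"
      by (auto simp: PiE_def extensional_def)
  qed
  hence "card (words q n) = card (PiE {..<n} (\<lambda>_. {..<q}))" by (rule bij_betw_same_card)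
  also have "\<dots> = q ^ n" by (simp add: card_PiE)
  finally show ?thesis .
qed

lemma fin_words: "finite (words q n)"
proof -
  have "words q n \<subseteq> (\<lambda>f i. if i < n then f i else 0) ` ({..<n} \<rightarrow>\<^sub>E {..<q})"
  proof
    fix x assume x: "x \<in> words q n"
    have "x = (\<lambda>i. if i < n then restrict x {..<n} i else 0)" using x by (auto simp: words_def)
    moreover have "restrict x {..<n} \<in> {..<n} \<rightarrow>\<^sub>E {..<q}" using x by (auto simp: words_def)
    ultimately show "x \<in> (\<lambda>f i. if i < n then f i else 0) ` ({..<n} \<rightarrow>\<^sub>E {..<q})" by blast
  qed
  thus ?thesis by (rule finite_subset) (intro finite_imageI finite_PiE; simp)
qed

lemma class_le:
  assumes pc: "proper_coloring q n 2 k c" and q1: "q \<ge> 1"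
  shows "card {x\<in>words q n. c x = j} \<le> q"
proof -
  let ?S = "{x\<in>words q n. c x = j}"
  have fS: "finite ?S" using fin_words by auto
  have near: "hdist n x y \<le> 1" if "x\<in>?S" "y\<in>?S" for x y
  proof (cases "x = y")
    case True thus ?thesis by (simp add: hdist_def)
  next
    case False
    show ?thesis
    proof (rule ccontr)
      assume "\<not> hdist n x y \<le> 1"
      hence "H_adj q n 2 x y" using that unfolding H_adj_def by simp
      hence "c x \<noteq> c y" using pc False unfolding proper_coloring_def by blast
      thus False using that by simp
    qed
  qed
  show ?thesis
  proof (cases "\<exists>x\<in>?S. \<exists>y\<in>?S. x\<noteq>y")
    case False
    have "card ?S \<le> Suc 0" using False card_le_Suc0_iff_eq[OF fS] by blast
    moreover have "q \<ge> 1" by (rule q1)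
    ultimately show ?thesis by simp
  next
    case True
    then obtain x y where xy: "x\<in>?S" "y\<in>?S" "x\<noteq>y" by blast
    let ?D = "{i. i < n \<and> x i \<noteq> y i}"
    have "?D \<noteq> {}"
    proof
      assume D: "?D = {}"
      have "x = y"
      proof
        fix i show "x i = y i"
        proof (cases "i < n")
          case True thus ?thesis using D by blast
        next
          case False thus ?thesis using xy(1,2) by (simp add: words_def)
        qed
      qed
      thus False using xy by simp
    qed
    moreover have "card ?D \<le> 1" using near[OF xy(1,2)] by (simp add: hdist_def)
    moreover have "finite ?D" by auto
    ultimately have "card ?D = 1" using card_0_eq[of ?D] by linarith
    then obtain i where Di: "?D = {i}" by (rule card_1_singletonE)
    hence i: "i < n" "x i \<noteq> y i" by auto
    have agree: "z l = x l" if z: "z\<in>?S" and l: "l\<noteq>i" for z l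
    proof (rule ccontr)
      assume ne: "z l \<noteq> x l"
      have ln: "l < n"
      proof (rule ccontr)
        assume "\<not> l < n"
        thus False using ne z xy(1) by (simp add: words_def)
      qed
      show False
      proof (cases "z i = x i")
        case False
        have "hdist n x z \<ge> 2" by (rule hd2[OF i(1) ln l[symmetric]]) (use False ne in auto)
        thus False using near[OF xy(1) z] by simp
      next
        case True
        have "l \<notin> {i}" using l by simp
        hence "l \<notin> ?D" unfolding Di .
        hence "y l = x l" using ln by simp
        hence "hdist n z y \<ge> 2" by (intro hd2[OF i(1) ln l[symmetric]]) (use True ne i(2) in auto)
        thus False using near[OF z xy(2)] by simp
      qed
    qed
    have "inj_on (\<lambda>z. z i) ?S"
    proof (rule inj_onI)
      fix z z' assume zz: "z\<in>?S" "z'\<in>?S" "z i = z' i"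
      show "z = z'"
      proof
        fix l show "z l = z' l"
          using zz agree[OF zz(1), of l] agree[OF zz(2), of l] by (cases "l = i") simp_all
      qed
    qed
    moreover have "(\<lambda>z. z i) ` ?S \<subseteq> {..<q}" using i(1) by (auto simp: words_def)
    ultimately have "card ?S \<le> card {..<q}" by (intro card_inj_on_le) auto
    thus ?thesis by simp
  qed
qed
lemma words_union: "proper_coloring q n d k c \<Longrightarrow> words q n = (\<Union>j\<in>{..<k}. {x\<in>words q n. c x = j})"
  unfolding proper_coloring_def by auto

lemma lower:
  assumes pc: "proper_coloring q n 2 k c" and q: "q \<ge> 1" and n: "n \<ge> 1"
  shows "q ^ (n - 1) \<le> k"
proof -
  have "q ^ n = card (\<Union>j\<in>{..<k}. {x\<in>words q n. c x = j})"
    using words_union[OF pc] card_words[of q n] by simp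
  also have "\<dots> \<le> (\<Sum>j<k. card {x\<in>words q n. c x = j})" by (rule card_UN_le) simp
  also have "\<dots> \<le> (\<Sum>j<k. q)" by (rule sum_mono) (rule class_le[OF pc q])
  also have "\<dots> = q * k" by simp
  finally have 1: "q ^ n \<le> q * k" .
  have "q ^ n = q * q ^ (n-1)" using n by (cases n) auto
  with 1 have "q * q ^ (n-1) \<le> q * k" by simp
  thus ?thesis using q by simp
qed

lemma upper:
  assumes n: "n \<ge> 1"
  shows "\<exists>c. proper_coloring q n 2 (q ^ (n - 1)) c"
proof -
  let ?p = "\<lambda>x::nat\<Rightarrow>nat. (\<lambda>i. if i < n - 1 then x i else 0)"
  have fin: "finite (words q (n-1))" by (rule fin_words)
  obtain h where h: "bij_betw h (words q (n-1)) {0..<card (words q (n-1))}"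
    using ex_bij_betw_finite_nat[OF fin] by blast
  have pw: "?p x \<in> words q (n-1)" if "x \<in> words q n" for x using that n by (auto simp: words_def)
  show ?thesis
  proof (intro exI[of _ "\<lambda>x. h (?p x)"], unfold proper_coloring_def, intro conjI allI impI ballI)
    fix x assume "x \<in> words q n"
    hence "h (?p x) \<in> {0..<card (words q (n-1))}" using h pw bij_betwE by blast
    thus "h (?p x) < q ^ (n-1)" using card_words[of q "n-1"] by simp
  next
    fix x y assume a: "x \<noteq> y \<and> H_adj q n 2 x y"
    show "h (?p x) \<noteq> h (?p y)"
    proof
      assume "h (?p x) = h (?p y)"
      moreover have "?p x \<in> words q (n-1)" "?p y \<in> words q (n-1)" using pw a unfolding H_adj_def by auto
      ultimately have e: "?p x = ?p y" using h unfolding bij_betw_def inj_on_def by blast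
      have "x i = y i" if "i < n - 1" for i using fun_cong[OF e, of i] that by simp
      have "{i. i < n \<and> x i \<noteq> y i} \<subseteq> {n-1}" 
      proof
        fix i assume "i \<in> {i. i < n \<and> x i \<noteq> y i}"
        hence "i < n" "\<not> i < n - 1" using \<open>\<And>i. i < n - 1 \<Longrightarrow> x i = y i\<close> by auto
        thus "i \<in> {n-1}" by simp
      qed
      hence "card {i. i < n \<and> x i \<noteq> y i} \<le> card {n-1}" by (intro card_mono) auto
      hence "hdist n x y \<le> 1" unfolding hdist_def by simp
      thus False using a unfolding H_adj_def by simp
    qed
  qed
qed

theorem proposition3p6:
  fixes q n :: nat
  assumes "q \<ge> 2" and "n \<ge> 2" and "q = 2 \<longrightarrow> n \<ge> 3"
  shows "chromatic_number q n 2 = q ^ (n - 1) \<and>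
         (\<forall>c. proper_coloring q n 2 (q ^ (n - 1)) c \<longrightarrow> even_coloring q n (q ^ (n - 1)) c)"
proof
  have q1: "q \<ge> 1" and n1: "n \<ge> 1" using assms by auto
  show "chromatic_number q n 2 = q ^ (n - 1)"
    unfolding chromatic_number_def
  proof (rule Least_equality)
    show "\<exists>c. proper_coloring q n 2 (q ^ (n - 1)) c" using upper[OF n1] .
    show "\<And>k. \<exists>c. proper_coloring q n 2 k c \<Longrightarrow> q ^ (n - 1) \<le> k"
      using lower[OF _ q1 n1] by blast
  qed
next
  have q1: "q \<ge> 1" and n1: "n \<ge> 1" using assms by auto
  show "\<forall>c. proper_coloring q n 2 (q ^ (n - 1)) c \<longrightarrow> even_coloring q n (q ^ (n - 1)) c"
  proof (intro allI impI)
    fix c assume pc: "proper_coloring q n 2 (q ^ (n - 1)) c"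
    let ?k = "q ^ (n - 1)"
    let ?C = "\<lambda>j. {x\<in>words q n. c x = j}"
    have fw: "finite (words q n)" by (rule fin_words)
    have eq: "card (?C j) = q" if j: "j < ?k" for j
    proof (rule ccontr)
      assume "card (?C j) \<noteq> q"
      hence lt: "card (?C j) < q" using class_le[OF pc q1, of j] by simp
      have "q ^ n = card (\<Union>j\<in>{..<?k}. ?C j)"
        using words_union[OF pc] card_words[of q n] by simp
      also have "\<dots> = (\<Sum>j<?k. card (?C j))"
        by (rule card_UN_disjoint) (use fw in auto)
      also have "\<dots> < (\<Sum>j<?k. q)"
        by (rule sum_strict_mono_ex1) (use class_le[OF pc q1] lt j in auto)
      also have "\<dots> = q ^ n"
      proof -
        obtain m where m: "n = Suc m" using n1 by (cases n) auto
        show ?thesis unfolding m by (simp add: mult.commute)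
      qed
      finally show False by simp
    qed
    thus "even_coloring q n ?k c" unfolding even_coloring_def by simp
  qed
qed

end
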